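(* Let $n>2k>0$ be integers and suppose that $\mathcal G\subset\binom{[n-1]}{k-1}$ and $\mathcal H\subset\binom{[n-1]}{k}$ are cross-intersecting and $|\mathcal G|>\binom{n-1}{k-1}-\binom{n-k}{k-1}$. Then $|\mathcal H|\le k-1$.
   Context: $[m]=\{1,\dots,m\}$ and $\binom{[m]}{t}$ is the collection of all $t$-element subsets of $[m]$. Two families $\mathcal G,\mathcal H$ are cross-intersecting if $G\cap H\neq\emptyset$ for all $G\in\mathcal G$, $H\in\mathcal H$. *)

theory Defs
  imports Main
begin

definition ksets :: "nat \<Rightarrow> nat \<Rightarrow> nat set set" where
  "ksets m t = {A. A \<subseteq> {1..m} \<and> card A = t}"

definition cross_intersecting :: "'a set set \<Rightarrow> 'a set set \<Rightarrow> bool" where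
  "cross_intersecting G H \<longleftrightarrow> (\<forall>A\<in>G. \<forall>B\<in>H. A \<inter> B \<noteq> {})"

end

theory Submission
  imports Defs
begin

definition Dis :: "nat \<Rightarrow> nat \<Rightarrow> nat set set \<Rightarrow> nat set set" where
  "Dis m k F = {A \<in> ksets m (k - 1). \<exists>B\<in>F. A \<inter> B = {}}"

lemma ksets_finite: "finite (ksets m t)"
  unfolding ksets_def by (rule finite_subset[of _ "Pow {1..m}"]) auto

lemma ksets_card: "card (ksets m t) = m choose t"
  unfolding ksets_def using n_subsets[of "{1..m}" t] by simp

lemma choose_diag_mono: "(a::nat) choose b \<le> (a + d) choose (b + d)"
proof (induction d)
  case 0 then show ?case by simp
next
  case (Suc d)
  have "(a + Suc d) choose (b + Suc d) = ((a + d) choose (b + d)) + ((a + d) choose Suc (b + d))"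
    by (simp add: binomial_Suc_Suc)
  then show ?case using Suc by linarith
qed

lemma step:
  assumes m: "2 * k \<le> m" and k: "0 < k" and fin: "finite F"
    and FH: "F \<subseteq> ksets m k" and Hk: "H \<in> ksets m k" and HF: "H \<notin> F"
    and cF: "card F \<le> k - 1"
  shows "card (Dis m k F) + ((m - k - card F) choose (k - 1 - card F)) \<le> card (Dis m k (insert H F))"
proof -
  have Hsub: "H \<subseteq> {1..m}" and cH: "card H = k" using Hk by (auto simp: ksets_def)
  have "\<forall>B\<in>F. \<exists>x. x \<in> B \<and> x \<notin> H"
  proof
    fix B assume B: "B \<in> F"
    have "B \<subseteq> {1..m}" "card B = k" using B FH by (auto simp: ksets_def)
    moreover have "B \<noteq> H" using B HF by auto
    ultimately have "\<not> B \<subseteq> H" using cH card_subset_eq[of H B] finite_subset[OF Hsub] by auto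
    then show "\<exists>x. x \<in> B \<and> x \<notin> H" by auto
  qed
  then obtain y where y: "\<And>B. B \<in> F \<Longrightarrow> y B \<in> B \<and> y B \<notin> H" by metis
  define Y where "Y = y ` F"
  define t where "t = card Y"
  have tF: "t \<le> card F" unfolding t_def Y_def using card_image_le[OF fin] by auto
  have Ysub: "Y \<subseteq> {1..m}" using y FH unfolding Y_def ksets_def by auto
  have YH: "Y \<inter> H = {}" using y unfolding Y_def by auto
  have finY: "finite Y" using Ysub finite_subset by blast
  define R where "R = {1..m} - (H \<union> Y)"
  have cHY: "card (H \<union> Y) = k + t" using card_Un_disjoint[of H Y] YH finY finite_subset[OF Hsub] cH t_def by auto
  have cR: "card R = m - k - t" unfolding R_def
    using card_Diff_subset[of "H \<union> Y" "{1..m}"] Hsub Ysub cHY finY finite_subset[OF Hsub] by auto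
  have finR: "finite R" unfolding R_def by auto
  define s where "s = k - 1 - t"
  define N where "N = (\<lambda>Z. Y \<union> Z) ` {Z. Z \<subseteq> R \<and> card Z = s}"
  have inj: "inj_on (\<lambda>Z. Y \<union> Z) {Z. Z \<subseteq> R \<and> card Z = s}"
  proof (rule inj_onI)
    fix Z1 Z2 assume "Z1 \<in> {Z. Z \<subseteq> R \<and> card Z = s}" "Z2 \<in> {Z. Z \<subseteq> R \<and> card Z = s}" "Y \<union> Z1 = Y \<union> Z2"
    then show "Z1 = Z2" unfolding R_def by blast
  qed
  have cN: "card N = (m - k - t) choose (k - 1 - t)"
    unfolding N_def using card_image[OF inj] n_subsets[OF finR, of s] cR s_def by simp
  have tk: "t \<le> k - 1" using tF cF by simp
  have NDis: "N \<subseteq> Dis m k (insert H F) - Dis m k F"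
  proof
    fix A assume "A \<in> N"
    then obtain Z where Z: "Z \<subseteq> R" "card Z = s" "A = Y \<union> Z" unfolding N_def by auto
    have finZ: "finite Z" using Z finR finite_subset by blast
    have "Y \<inter> Z = {}" using Z unfolding R_def by blast
    then have cA: "card A = k - 1" using card_Un_disjoint[OF finY finZ] Z s_def t_def tk by simp
    have Asub: "A \<subseteq> {1..m}" using Z Ysub unfolding R_def by blast
    have AH: "A \<inter> H = {}" using Z YH unfolding R_def by blast
    have AB: "\<forall>B\<in>F. A \<inter> B \<noteq> {}" using y Z unfolding Y_def by blast
    show "A \<in> Dis m k (insert H F) - Dis m k F"
      using cA Asub AH AB unfolding Dis_def ksets_def by auto
  qed
  have sub1: "Dis m k F \<subseteq> Dis m k (insert H F)" unfolding Dis_def by auto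
  have fin2: "finite (Dis m k (insert H F))" unfolding Dis_def using ksets_finite by auto
  have "card (Dis m k F) + card N = card (Dis m k F \<union> N)"
    using NDis fin2 sub1 by (subst card_Un_disjoint) (auto intro: finite_subset)
  also have "\<dots> \<le> card (Dis m k (insert H F))"
    using NDis sub1 fin2 by (intro card_mono) auto
  finally have A: "card (Dis m k F) + card N \<le> card (Dis m k (insert H F))" .
  have "(m - k - card F) choose (k - 1 - card F)
        \<le> ((m - k - card F) + (card F - t)) choose ((k - 1 - card F) + (card F - t))"
    by (rule choose_diag_mono)
  also have "(m - k - card F) + (card F - t) = m - k - t" using tF cF m by simp
  also have "(k - 1 - card F) + (card F - t) = k - 1 - t" using tF cF by simp
  finally show ?thesis using A cN by simp
qed

lemma mainL:
  assumes m: "2 * k \<le> m" and k: "0 < k"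
  shows "finite F \<Longrightarrow> F \<subseteq> ksets m k \<Longrightarrow> card F \<le> k - 1 \<Longrightarrow>
    (m - k + 1) choose (k - 1) \<le> card (Dis m k F) + ((m - k + 1 - card F) choose (k - 1 - card F))"
proof (induction F rule: finite_induct)
  case empty then show ?case by simp
next
  case (insert H F)
  have cI: "card (insert H F) = card F + 1" using insert by simp
  have IH: "(m - k + 1) choose (k - 1) \<le> card (Dis m k F) + ((m - k + 1 - card F) choose (k - 1 - card F))"
    using insert cI by simp
  have St: "card (Dis m k F) + ((m - k - card F) choose (k - 1 - card F)) \<le> card (Dis m k (insert H F))"
    using step[OF m k insert(1), of H] insert cI by auto
  have e1: "m - k + 1 - card F = Suc (m - k - card F)" using insert(5) cI m by simp
  have e2: "k - 1 - card F = Suc (k - 1 - (card F + 1))" using insert(5) cI by simp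
  have "(m - k + 1 - card F) choose (k - 1 - card F)
     = ((m - k - card F) choose (k - 1 - card F)) + ((m - k - card F) choose (k - 1 - (card F + 1)))"
    unfolding e1 e2 binomial_Suc_Suc by simp
  moreover have "m - k + 1 - card (insert H F) = m - k - card F" using cI by simp
  ultimately show ?case using IH St cI by simp
qed

theorem corollary2p1:
  fixes n k :: nat and G H :: "nat set set"
  assumes "0 < k" and "2 * k < n"
    and "G \<subseteq> ksets (n - 1) (k - 1)" and "H \<subseteq> ksets (n - 1) k"
    and "cross_intersecting G H"
    and "int (card G) > int ((n - 1) choose (k - 1)) - int ((n - k) choose (k - 1))"
  shows "card H \<le> k - 1"
proof (rule ccontr)
  assume "\<not> card H \<le> k - 1"
  then have "k \<le> card H" by simp
  define m where "m = n - 1"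
  have m: "2 * k \<le> m" using assms(2) m_def by simp
  have finH: "finite H" using assms(4) ksets_finite finite_subset by blast
  obtain H' where H': "H' \<subseteq> H" "card H' = k"
    using obtain_subset_with_card_n[OF \<open>k \<le> card H\<close>] by metis
  then have "H' \<noteq> {}" using assms(1) by auto
  then obtain h where h: "h \<in> H'" by auto
  define F where "F = H' - {h}"
  have finF: "finite F" using F_def H' finH finite_subset by blast
  have cF: "card F = k - 1" using F_def H' h finH finite_subset by (simp add: card_Diff_singleton)
  have FK: "F \<subseteq> ksets m k" using F_def H' assms(4) m_def by auto
  have L: "(m - k + 1) choose (k - 1) \<le> card (Dis m k F) + ((m - k + 1 - card F) choose (k - 1 - card F))"
    using mainL[OF m assms(1) finF FK] cF by simp
  have S: "card (Dis m k F) + ((m - k - card F) choose (k - 1 - card F)) \<le> card (Dis m k (insert h F))"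
    using step[OF m assms(1) finF FK, of h] h H' assms(4) m_def cF F_def by auto
  have ins: "insert h F = H'" using F_def h by auto
  have D: "(m - k + 1) choose (k - 1) \<le> card (Dis m k H')" using L S cF ins by simp
  have disj: "G \<inter> Dis m k H' = {}"
    using assms(5) H'(1) unfolding cross_intersecting_def Dis_def by blast
  have sub: "G \<union> Dis m k H' \<subseteq> ksets m (k - 1)" using assms(3) m_def unfolding Dis_def by auto
  have "card G + card (Dis m k H') = card (G \<union> Dis m k H')"
    using disj sub ksets_finite by (subst card_Un_disjoint) (auto intro: finite_subset)
  also have "\<dots> \<le> m choose (k - 1)" using card_mono[OF ksets_finite sub] ksets_card by simp
  finally have "card G + ((m - k + 1) choose (k - 1)) \<le> m choose (k - 1)" using D by simp
  moreover have "m - k + 1 = n - k" using m_def assms(1,2) by simp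
  ultimately show False using assms(6) m_def by simp
qed

end
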